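(* Let $S \geq 2$ and let $f:\{1,\dots,S\}\to\{1,\dots,S\}$ be a uniformly random map, i.e. the values $f(1),\dots,f(S)$ are independent and each is uniformly distributed on $\{1,\dots,S\}$. Define $C_1,\dots,C_S$ and $C$ as in the context. Then $$\mathrm{E}(C) < \mathrm{E}(C_1)\,(\ln S + 1),$$ and there is a constant $K>0$, independent of $S$, such that $\mathrm{Var}(C) \leq K\, S \ln S$ for all $S \geq 2$.
   Context: Setting: the random map $f$ models the state-to-state dynamics of an agent following a deterministic policy in an environment with a deterministic transition function whose prior is uniform, so that from each state $s$ the next state $f(s)$ is uniformly distributed over the $S$ states, independently across states. Construction of the cycles. Start at state $1$ and follow the orbit $1, f(1), f(f(1)),\dots$ until a previously visited state is reached for the first time; from that point the orbit is periodic, and $\mathcal{C}_1$ is the set of states on this cycle, with $C_1 = |\mathcal{C}_1|$. Inductively, for $i = 2,\dots,S$, start at state $i$ and follow its orbit under $f$ until it reaches a state already visited either earlier in this same orbit or in one of the orbits started from $1,\dots,i-1$. If it first reaches a state already visited earlier in its own orbit (call this event $T_i$; $T_1$ always occurs), the orbit from $i$ has closed a new cycle, $\mathcal{C}_i$ is the set of states on that cycle and $C_i = |\mathcal{C}_i|$. Otherwise the orbit has run into a path or cycle produced by an earlier starting state; then $\mathcal{C}_i = \emptyset$ and $C_i = 0$. Set $\mathcal{C} = \mathcal{C}_1\cup\dots\cup\mathcal{C}_S$ and $C = |\mathcal{C}| = \sum_{i=1}^S C_i$; equivalently, $C$ is the number of states lying on a cycle of $f$. All expectations and variances are taken with respect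 to the randomness of $f$, and $\ln$ denotes the natural logarithm. *)

theory Defs
  imports "HOL-Probability.Probability"
begin

text \<open>States are 1..S. A map on the state space is an extensional function
  (value undefined outside 1..S).\<close>
definition maps :: "nat \<Rightarrow> (nat \<Rightarrow> nat) set" where
  "maps S = {1..S} \<rightarrow>\<^sub>E {1..S}"

text \<open>Uniformly random map: f(1),...,f(S) independent, uniform on 1..S.\<close>
definition rmap :: "nat \<Rightarrow> (nat \<Rightarrow> nat) pmf" where
  "rmap S = pmf_of_set (maps S)"

definition cyc_states :: "nat \<Rightarrow> (nat \<Rightarrow> nat) \<Rightarrow> nat set" where
  "cyc_states S f = {s \<in> {1..S}. \<exists>n>0. (f ^^ n) s = s}"

definition numC :: "nat \<Rightarrow> (nat \<Rightarrow> nat) \<Rightarrow> nat" where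
  "numC S f = card (cyc_states S f)"

definition cycle1 :: "nat \<Rightarrow> (nat \<Rightarrow> nat) \<Rightarrow> nat set" where
  "cycle1 S f = {s \<in> cyc_states S f. \<exists>n. (f ^^ n) 1 = s}"

definition numC1 :: "nat \<Rightarrow> (nat \<Rightarrow> nat) \<Rightarrow> nat" where
  "numC1 S f = card (cycle1 S f)"

end

theory Submission
  imports Defs
begin


definition Bfix :: "nat \<Rightarrow> nat list \<Rightarrow> nat list \<Rightarrow> (nat \<Rightarrow> nat) set" where
  "Bfix S xs ts = {f \<in> maps S. \<forall>i<length xs. f (xs!i) = ts!i}"

lemma finite_maps: "finite (maps S)"
  unfolding maps_def by (simp add: finite_PiE)

lemma card_maps: "card (maps S) = S ^ S"
  unfolding maps_def by (simp add: card_PiE)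

lemma maps_in: "f \<in> maps S \<Longrightarrow> x \<in> {1..S} \<Longrightarrow> f x \<in> {1..S}"
  unfolding maps_def by auto

lemma card_Bfix:
  assumes "distinct xs" "length ts = length xs" "set xs \<subseteq> {1..S}" "set ts \<subseteq> {1..S}"
  shows "card (Bfix S xs ts) = S ^ (S - length xs)"
proof -
  let ?T = "\<lambda>x. case map_of (zip xs ts) x of Some y \<Rightarrow> {y} | None \<Rightarrow> {1..S}"
  have eq: "Bfix S xs ts = PiE {1..S} ?T"
  proof (intro set_eqI iffI)
    fix f assume f: "f \<in> Bfix S xs ts"
    show "f \<in> PiE {1..S} ?T"
    proof (rule PiE_I)
      fix x assume x: "x \<in> {1..S}"
      show "f x \<in> ?T x"
      proof (cases "x \<in> set xs")
        case True
        then obtain i where i: "i < length xs" "x = xs!i" by (auto simp: in_set_conv_nth)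
        then show ?thesis using f map_of_zip_nth[OF assms(2)[symmetric] assms(1), of i] assms(2)
          by (auto simp: Bfix_def)
      next
        case False
        have "map_of (zip xs ts) x = None" using False assms(2) by simp
        then show ?thesis using f x by (auto simp: Bfix_def maps_def)
      qed
    next
      fix x assume "x \<notin> {1..S}" then show "f x = undefined" using f by (auto simp: Bfix_def maps_def)
    qed
  next
    fix f assume f: "f \<in> PiE {1..S} ?T"
    have "f \<in> maps S" unfolding maps_def
    proof (rule PiE_I)
      fix x assume x: "x \<in> {1..S}"
      have "f x \<in> ?T x" using f x by auto
      then show "f x \<in> {1..S}" using assms(4)
        by (auto split: option.splits dest!: map_of_SomeD set_zip_rightD)
    next
      fix x assume "x \<notin> {1..S}" then show "f x = undefined" using f by auto
    qed
    moreover have "\<forall>i<length xs. f (xs!i) = ts!i"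
    proof (intro allI impI)
      fix i assume i: "i < length xs"
      have "xs!i \<in> {1..S}" using i assms(3) nth_mem by blast
      then have "f (xs!i) \<in> ?T (xs!i)" using f by auto
      then show "f (xs!i) = ts!i" using map_of_zip_nth[OF assms(2)[symmetric] assms(1), of i] assms(2) i
        by auto
    qed
    ultimately show "f \<in> Bfix S xs ts" by (auto simp: Bfix_def)
  qed
  have "card (PiE {1..S} ?T) = (\<Prod>x\<in>{1..S}. card (?T x))" by (simp add: card_PiE)
  also have "\<dots> = (\<Prod>x\<in>{1..S}. if x \<in> set xs then 1 else S)"
  proof (rule prod.cong[OF refl])
    fix x assume "x \<in> {1..S}"
    show "card (?T x) = (if x \<in> set xs then 1 else S)"
      using assms(2) by (auto split: option.splits simp: map_of_zip_is_None[OF assms(2)[symmetric]] dest: map_of_SomeD set_zip_leftD)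
  qed
  also have "\<dots> = (\<Prod>x\<in>{1..S} - set xs. S)"
    by (subst prod.mono_neutral_cong_right[of "{1..S}" "{1..S} - set xs"]) auto
  also have "\<dots> = S ^ (S - length xs)"
    using assms(3) by (simp add: card_Diff_subset distinct_card[OF assms(1)])
  finally show ?thesis using eq by simp
qed


definition tg :: "nat list \<Rightarrow> nat \<Rightarrow> nat list" where
  "tg xs j = tl xs @ [xs!j]"

definition orb :: "nat \<Rightarrow> nat \<Rightarrow> (nat \<Rightarrow> nat) \<Rightarrow> nat list \<Rightarrow> nat \<Rightarrow> bool" where
  "orb S s f xs j \<longleftrightarrow> f \<in> Bfix S xs (tg xs j) \<and> xs \<noteq> [] \<and> hd xs = s \<and> distinct xs
     \<and> set xs \<subseteq> {1..S} \<and> j < length xs"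

definition cyc_from :: "nat \<Rightarrow> (nat \<Rightarrow> nat) \<Rightarrow> nat \<Rightarrow> nat set" where
  "cyc_from S f s = {t \<in> cyc_states S f. \<exists>n. (f ^^ n) s = t}"

lemma tg_nth: "xs \<noteq> [] \<Longrightarrow> i < length xs \<Longrightarrow>
   tg xs j ! i = (if Suc i < length xs then xs ! Suc i else xs ! j)"
  unfolding tg_def by (auto simp: nth_append nth_tl)

lemma orb_step: "orb S s f xs j \<Longrightarrow> i < length xs \<Longrightarrow>
   f (xs!i) = (if Suc i < length xs then xs ! Suc i else xs ! j)"
  unfolding orb_def Bfix_def using tg_nth by auto

lemma orb_a: "orb S s f xs j \<Longrightarrow> i < length xs \<Longrightarrow> (f^^i) s = xs!i"
proof (induction i)
  case 0
  then show ?case by (auto simp: orb_def hd_conv_nth)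
next
  case (Suc i)
  then have "(f^^i) s = xs!i" by simp
  then show ?case using orb_step[OF Suc.prems(1), of i] Suc.prems by simp
qed

lemma orb_b: "orb S s f xs j \<Longrightarrow> (f^^length xs) s = xs!j"
proof -
  assume o: "orb S s f xs j"
  then have ne: "xs \<noteq> []" by (simp add: orb_def)
  then obtain m where m: "length xs = Suc m" by (cases xs) auto
  have "(f^^m) s = xs!m" using orb_a[OF o] m by simp
  then show ?thesis using orb_step[OF o, of m] m by simp
qed

lemma orb_c: assumes o: "orb S s f xs j" and jn: "j \<le> n" shows "\<exists>i. j \<le> i \<and> i < length xs \<and> (f^^n) s = xs!i"
  using jn
proof (induction n rule: dec_induct)
  case base
  then show ?case using orb_a[OF o, of j] o by (auto simp: orb_def)
next
  case (step n)
  then obtain i where i: "j \<le> i" "i < length xs" "(f^^n) s = xs!i" by blast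
  have "(f^^Suc n) s = f (xs!i)" using i by simp
  then show ?case using orb_step[OF o i(2)] i step.hyps o
    by (cases "Suc i < length xs") (auto intro: exI[of _ "Suc i"] exI[of _ j] simp: orb_def)
qed

lemma orb_per: assumes o: "orb S s f xs j" and i: "j \<le> i" "i < length xs"
  shows "(f^^(length xs - j)) (xs!i) = xs!i"
proof -
  let ?k = "length xs"
  have "(f^^(?k - j)) (xs!i) = (f^^(?k - j)) ((f^^i) s)" using orb_a[OF o i(2)] by simp
  also have "\<dots> = (f^^(?k - j + i)) s" by (simp add: funpow_add)
  also have "?k - j + i = (i - j) + ?k" using i by simp
  also have "(f^^((i - j) + ?k)) s = (f^^(i-j)) ((f^^?k) s)" by (simp add: funpow_add)
  also have "\<dots> = (f^^(i-j)) ((f^^j) s)" using orb_b[OF o] orb_a[OF o, of j] o by (simp add: orb_def)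
  also have "\<dots> = (f^^(i - j + j)) s" by (simp add: funpow_add)
  also have "\<dots> = xs!i" using i orb_a[OF o i(2)] by simp
  finally show ?thesis .
qed

lemma funpow_iter: "(f^^p) t = t \<Longrightarrow> (f^^(q*p)) t = t"
  by (induction q) (auto simp: funpow_add)

lemma orb_cyc: assumes o: "orb S s f xs j"
  shows "cyc_from S f s = (\<lambda>i. xs!i) ` {j..<length xs}"
proof (intro set_eqI iffI)
  fix t assume "t \<in> cyc_from S f s"
  then obtain n p where t: "(f^^n) s = t" "p > 0" "(f^^p) t = t"
    by (auto simp: cyc_from_def cyc_states_def)
  have "(f^^(j*p + n)) s = (f^^(j*p)) t" using t(1) by (simp add: funpow_add)
  also have "\<dots> = t" using funpow_iter[OF t(3)] by simp
  finally have "(f^^(j*p + n)) s = t" .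
  moreover have "j \<le> j*p + n" using t(2) by (metis le_add1 le_trans mult.right_neutral mult_le_mono2 Suc_leI One_nat_def)
  ultimately show "t \<in> (\<lambda>i. xs!i) ` {j..<length xs}" using orb_c[OF o] by force
next
  fix t assume "t \<in> (\<lambda>i. xs!i) ` {j..<length xs}"
  then obtain i where i: "j \<le> i" "i < length xs" "t = xs!i" by auto
  have "xs!i \<in> set xs" using i(2) by simp
  then have "t \<in> {1..S}" using o i(3) unfolding orb_def by auto
  moreover have "length xs - j > 0" using i by simp
  moreover note orb_per[OF o i(1,2)]
  moreover have "(f^^i) s = t" using orb_a[OF o i(2)] i by simp
  ultimately have "t \<in> cyc_states S f" unfolding cyc_states_def using i(3) by (intro CollectI conjI exI[of _ "length xs - j"]) auto
  then show "t \<in> cyc_from S f s" unfolding cyc_from_def using \<open>(f^^i) s = t\<close> by auto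
qed

lemma orb_card: assumes o: "orb S s f xs j"
  shows "card (cyc_from S f s) = length xs - j"
proof -
  have "inj_on (\<lambda>i. xs!i) {j..<length xs}" using o
    by (auto simp: orb_def inj_on_def nth_eq_iff_index_eq)
  then show ?thesis using orb_cyc[OF o] by (simp add: card_image)
qed

lemma orb_s: assumes o: "orb S s f xs j"
  shows "s \<in> cyc_states S f \<longleftrightarrow> j = 0"
proof -
  have "s \<in> cyc_states S f \<longleftrightarrow> s \<in> cyc_from S f s"
    by (auto simp: cyc_from_def intro: exI[of _ 0])
  also have "\<dots> \<longleftrightarrow> s \<in> (\<lambda>i. xs!i) ` {j..<length xs}" using orb_cyc[OF o] by simp
  also have "\<dots> \<longleftrightarrow> j = 0"
  proof -
    have s0: "s = xs!0" using o by (auto simp: orb_def hd_conv_nth)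
    have d: "distinct xs" "xs \<noteq> []" "j < length xs" using o by (auto simp: orb_def)
    show ?thesis using s0 d by (auto simp: nth_eq_iff_index_eq)
  qed
  finally show ?thesis .
qed


lemma orb_lt: assumes o1: "orb S s f xs j" and o2: "orb S s f ys j'" and l: "length xs < length ys"
  shows False
proof -
  let ?k = "length xs"
  have "(f^^?k) s = ys!?k" using orb_a[OF o2 l] .
  moreover have "(f^^?k) s = xs!j" using orb_b[OF o1] .
  moreover have jk: "j < ?k" using o1 by (simp add: orb_def)
  moreover have "xs!j = ys!j" using orb_a[OF o1 jk] orb_a[OF o2, of j] jk l by simp
  ultimately have "ys!?k = ys!j" by simp
  then have "?k = j" using o2 l jk by (simp add: orb_def nth_eq_iff_index_eq)
  then show False using jk by simp
qed

lemma orb_uniq: assumes o1: "orb S s f xs j" and o2: "orb S s f ys j'"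
  shows "xs = ys \<and> j = j'"
proof -
  have l: "length xs = length ys" using orb_lt[OF o1 o2] orb_lt[OF o2 o1] linorder_neqE_nat by blast
  have x: "xs = ys"
    by (rule nth_equalityI) (use l orb_a[OF o1] orb_a[OF o2] in auto)
  have "xs!j = xs!j'" using orb_b[OF o1] orb_b[OF o2] x by simp
  then have "j = j'" using o1 o2 x by (simp add: orb_def nth_eq_iff_index_eq)
  then show ?thesis using x by simp
qed

lemma orbit_in: "f \<in> maps S \<Longrightarrow> s \<in> {1..S} \<Longrightarrow> (f^^n) s \<in> {1..S}"
proof (induction n)
  case (Suc n)
  then have "(f^^n) s \<in> {1..S}" by simp
  then show ?case using maps_in[OF Suc.prems(1)] by simp
qed simp

lemma orb_cover: assumes f: "f \<in> maps S" and s: "s \<in> {1..S}"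
  shows "\<exists>xs j. orb S s f xs j"
proof -
  let ?g = "\<lambda>n. (f^^n) s"
  let ?P = "\<lambda>n. \<exists>i<n. ?g n = ?g i"
  have "?g ` {0..S} \<subseteq> {1..S}" using orbit_in[OF f s] by auto
  then have "card (?g ` {0..S}) \<le> S" using card_mono[of "{1..S}"] by fastforce
  then have "\<not> inj_on ?g {0..S}" by (intro pigeonhole) simp
  then obtain a b where ab: "a \<noteq> b" "?g a = ?g b" by (auto simp: inj_on_def)
  have ex: "\<exists>n. ?P n"
  proof (cases "a < b")
    case True then show ?thesis using ab by metis
  next
    case False then have "b < a" using ab by simp
    then show ?thesis using ab by metis
  qed
  define k where "k = (LEAST n. ?P n)"
  have Pk: "?P k" unfolding k_def by (rule LeastI_ex[OF ex])
  then obtain j where j: "j < k" "?g k = ?g j" by blast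
  have notP: "\<And>n. n < k \<Longrightarrow> \<not> ?P n" unfolding k_def using not_less_Least by blast
  define xs where "xs = map ?g [0..<k]"
  have lx: "length xs = k" by (simp add: xs_def)
  have xsn: "\<And>i. i < k \<Longrightarrow> xs!i = ?g i" by (simp add: xs_def)
  have dist: "distinct xs"
    unfolding distinct_conv_nth
  proof (intro allI impI)
    fix i i' assume "i < length xs" "i' < length xs" "i \<noteq> i'"
    then show "xs!i \<noteq> xs!i'" using notP[of i] notP[of i'] xsn lx
      by (cases "i < i'") (metis, metis linorder_neqE_nat)
  qed
  have k0: "k > 0" using j by simp
  have "orb S s f xs j"
    unfolding orb_def Bfix_def
  proof (intro conjI CollectI allI impI)
    show "f \<in> maps S" by (rule f)
    fix i assume i: "i < length xs"
    have ne: "xs \<noteq> []" using k0 lx by auto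
    show "f (xs!i) = tg xs j ! i"
    proof (cases "Suc i < length xs")
      case True
      then show ?thesis using tg_nth[OF ne i] xsn lx i by simp
    next
      case False
      then have "Suc i = k" using i lx by simp
      then show ?thesis using tg_nth[OF ne i] xsn lx i j by (simp del: funpow.simps add: funpow.simps(2)[symmetric] comp_def) (metis funpow.simps(2) comp_apply)
    qed
  next
    show "xs \<noteq> []" using k0 lx by auto
    show "hd xs = s" using k0 by (simp add: xs_def hd_map upt_conv_Cons)
    show "distinct xs" by (rule dist)
    show "set xs \<subseteq> {1..S}" using orbit_in[OF f s] by (auto simp: xs_def)
    show "j < length xs" using j lx by simp
  qed
  then show ?thesis by blast
qed



definition DL :: "nat \<Rightarrow> nat \<Rightarrow> nat list set" where
  "DL S s = {xs. xs \<noteq> [] \<and> hd xs = s \<and> distinct xs \<and> set xs \<subseteq> {1..S}}"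

definition DLA :: "nat \<Rightarrow> nat list set" where
  "DLA S = {xs. xs \<noteq> [] \<and> distinct xs \<and> set xs \<subseteq> {1..S}}"

lemma distinct_len_le: "distinct xs \<Longrightarrow> set xs \<subseteq> {1..S} \<Longrightarrow> length xs \<le> S"
  by (metis card_atLeastAtMost card_mono diff_Suc_1 distinct_card finite_atLeastAtMost)

lemma finite_DLA: "finite (DLA S)"
  by (rule finite_subset[OF _ finite_lists_length_le[of "{1..S}" S]])
     (auto simp: DLA_def distinct_len_le)

lemma finite_DL: "finite (DL S s)"
  by (rule finite_subset[OF _ finite_DLA[of S]]) (auto simp: DL_def DLA_def)

lemma orb_B: "orb S s f xs j \<longleftrightarrow> f \<in> Bfix S xs (tg xs j) \<and> xs \<in> DL S s \<and> j < length xs"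
  unfolding orb_def DL_def by auto

lemma tg_props: assumes "xs \<in> DL S s" "j < length xs"
  shows "length (tg xs j) = length xs" "set (tg xs j) \<subseteq> {1..S}"
proof -
  show "length (tg xs j) = length xs" using assms by (auto simp: tg_def DL_def)
  have "set (tl xs) \<subseteq> set xs" by (cases xs) auto
  moreover have "xs!j \<in> set xs" using assms(2) by simp
  ultimately show "set (tg xs j) \<subseteq> {1..S}" using assms(1) by (auto simp: tg_def DL_def)
qed

lemma sum_orb:
  fixes g :: "(nat \<Rightarrow> nat) \<Rightarrow> real"
  assumes s: "s \<in> {1..S}" and h: "\<And>f xs j. orb S s f xs j \<Longrightarrow> g f = h xs j"
  shows "sum g (maps S) = (\<Sum>xs\<in>DL S s. \<Sum>j<length xs. real S ^ (S - length xs) * h xs j)"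
proof -
  let ?I = "SIGMA xs:DL S s. {..<length xs}"
  let ?B = "\<lambda>(xs,j). Bfix S xs (tg xs j)"
  have fI: "finite ?I" using finite_DL by auto
  have un: "maps S = \<Union>(?B ` ?I)"
  proof (intro set_eqI iffI)
    fix f assume f: "f \<in> maps S"
    obtain xs j where "orb S s f xs j" using orb_cover[OF f s] by blast
    then show "f \<in> \<Union>(?B ` ?I)" unfolding orb_B by blast
  next
    fix f assume "f \<in> \<Union>(?B ` ?I)" then show "f \<in> maps S" by (auto simp: Bfix_def)
  qed
  have "sum g (maps S) = (\<Sum>d\<in>?I. sum g (?B d))"
    unfolding un
  proof (rule sum.UNION_disjoint[OF fI])
    show "\<forall>d\<in>?I. finite (?B d)"
      by (auto intro: finite_subset[OF _ finite_maps] simp: Bfix_def)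
    show "\<forall>d\<in>?I. \<forall>d'\<in>?I. d \<noteq> d' \<longrightarrow> ?B d \<inter> ?B d' = {}"
    proof (intro ballI impI)
      fix d d' assume d: "d \<in> ?I" "d' \<in> ?I" "d \<noteq> d'"
      obtain xs j where dd: "d = (xs,j)" by (cases d)
      obtain ys j' where dd': "d' = (ys,j')" by (cases d')
      show "?B d \<inter> ?B d' = {}"
      proof (rule ccontr)
        assume "?B d \<inter> ?B d' \<noteq> {}"
        then obtain f where "f \<in> ?B d" "f \<in> ?B d'" by blast
        then have "orb S s f xs j" "orb S s f ys j'" using d dd dd' unfolding orb_B by auto
        then show False using orb_uniq d(3) dd dd' by blast
      qed
    qed
  qed
  also have "\<dots> = (\<Sum>(xs,j)\<in>?I. real S ^ (S - length xs) * h xs j)"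
  proof (rule sum.cong[OF refl])
    fix d assume d: "d \<in> ?I"
    obtain xs j where dd: "d = (xs,j)" by (cases d)
    have xs: "xs \<in> DL S s" "j < length xs" using d dd by auto
    have "sum g (?B d) = sum (\<lambda>_. h xs j) (Bfix S xs (tg xs j))"
      using h xs unfolding dd orb_B by (intro sum.cong) auto
    also have "\<dots> = real (card (Bfix S xs (tg xs j))) * h xs j" by simp
    also have "card (Bfix S xs (tg xs j)) = S ^ (S - length xs)"
      using xs tg_props[OF xs] by (intro card_Bfix) (auto simp: DL_def)
    finally show "sum g (?B d) = (case d of (xs,j) \<Rightarrow> real S ^ (S - length xs) * h xs j)"
      using dd by simp
  qed
  also have "\<dots> = (\<Sum>xs\<in>DL S s. \<Sum>j<length xs. real S ^ (S - length xs) * h xs j)"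
    by (rule sum.Sigma[symmetric]) (auto simp: finite_DL)
  finally show ?thesis .
qed



definition LS :: "nat set \<Rightarrow> nat \<Rightarrow> nat" where
  "LS A k = card {xs. length xs = k \<and> distinct xs \<and> set xs \<subseteq> A}"

lemma LS_0: "LS A 0 = 1"
proof -
  have "{xs. length xs = 0 \<and> distinct xs \<and> set xs \<subseteq> A} = {[]}" by auto
  then show ?thesis by (simp add: LS_def)
qed

lemma LS_Suc: assumes fA: "finite A" shows "LS A (Suc k) = (card A - k) * LS A k"
proof (cases "Suc k \<le> card A")
  case True
  have e1: "LS A (Suc k) = \<Prod>{card A - Suc k + 1 .. card A}"
    unfolding LS_def by (rule card_lists_distinct_length_eq[OF fA True])
  have kk: "k \<le> card A" using True by simp
  have e2: "LS A k = \<Prod>{card A - k + 1 .. card A}"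
    unfolding LS_def by (rule card_lists_distinct_length_eq[OF fA kk])
  have h1: "card A - Suc k + 1 = card A - k" using True by simp
  have h2: "\<Prod>{card A - k .. card A} = (card A - k) * \<Prod>{Suc (card A - k) .. card A}"
    by (rule prod.atLeast_Suc_atMost) simp
  have h3: "Suc (card A - k) = card A - k + 1" by simp
  show ?thesis unfolding e1 e2 h1 h2 h3 ..
next
  case False
  have "{xs. length xs = Suc k \<and> distinct xs \<and> set xs \<subseteq> A} = {}"
  proof (rule ccontr)
    assume "{xs. length xs = Suc k \<and> distinct xs \<and> set xs \<subseteq> A} \<noteq> {}"
    then obtain xs where xs: "length xs = Suc k" "distinct xs" "set xs \<subseteq> A" by blast
    have "card (set xs) \<le> card A" by (rule card_mono[OF fA xs(3)])
    moreover have "card (set xs) = length xs" by (rule distinct_card[OF xs(2)])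
    ultimately show False using False xs(1) by simp
  qed
  then have "LS A (Suc k) = 0" unfolding LS_def by (simp only: card.empty)
  moreover have "card A - k = 0" using False by simp
  ultimately show ?thesis by simp
qed

lemma LS_rel: assumes S: "S \<ge> 1" shows "S * LS {2..S} k = LS {1..S} (Suc k)"
proof (induction k)
  case 0
  then show ?case by (simp add: LS_0 LS_Suc)
next
  case (Suc k)
  have "S * LS {2..S} (Suc k) = (S - 1 - k) * (S * LS {2..S} k)" by (simp add: LS_Suc)
  also have "\<dots> = (S - Suc k) * LS {1..S} (Suc k)" using Suc by simp
  also have "\<dots> = LS {1..S} (Suc (Suc k))" by (simp add: LS_Suc)
  finally show ?case .
qed

lemma sum_DL_hd: "(\<Sum>s\<in>{1..S}. \<Sum>xs\<in>DL S s. F xs) = (\<Sum>xs\<in>DLA S. F xs)"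
proof -
  have "DLA S = (\<Union>s\<in>{1..S}. DL S s)"
  proof (intro set_eqI iffI)
    fix xs assume xs: "xs \<in> DLA S"
    then have "hd xs \<in> set xs" "set xs \<subseteq> {1..S}" by (auto simp: DLA_def)
    then have "hd xs \<in> {1..S}" by blast
    moreover have "xs \<in> DL S (hd xs)" using xs by (simp add: DLA_def DL_def)
    ultimately show "xs \<in> (\<Union>s\<in>{1..S}. DL S s)" by blast
  next
    fix xs assume "xs \<in> (\<Union>s\<in>{1..S}. DL S s)"
    then show "xs \<in> DLA S" by (simp add: DLA_def DL_def)
  qed
  note eq = this
  have f1: "\<forall>s\<in>{1..S}. finite (DL S s)" using finite_DL by blast
  have d1: "\<forall>i\<in>{1..S}. \<forall>j\<in>{1..S}. i \<noteq> j \<longrightarrow> DL S i \<inter> DL S j = {}" by (auto simp: DL_def)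
  have "sum F (\<Union>(DL S ` {1..S})) = (\<Sum>s\<in>{1..S}. sum F (DL S s))"
    using sum.UNION_disjoint[OF finite_atLeastAtMost f1 d1] .
  then show ?thesis unfolding eq by (rule sym)
qed

lemma sum_DLA_len: "(\<Sum>xs\<in>DLA S. h (length xs)) = (\<Sum>k\<in>{1..S}. real (LS {1..S} k) * h k)"
proof -
  have "(\<Sum>xs\<in>DLA S. h (length xs)) = (\<Sum>k\<in>{1..S}. \<Sum>xs\<in>{x\<in>DLA S. length x = k}. h (length xs))"
    by (rule sum.group[symmetric, OF finite_DLA]) (auto simp: DLA_def distinct_len_le Suc_le_eq)
  also have "\<dots> = (\<Sum>k\<in>{1..S}. real (LS {1..S} k) * h k)"
  proof (rule sum.cong[OF refl])
    fix k assume k: "k \<in> {1..S}"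
    have "{x\<in>DLA S. length x = k} = {xs. length xs = k \<and> distinct xs \<and> set xs \<subseteq> {1..S}}"
      using k by (auto simp: DLA_def)
    then show "(\<Sum>xs\<in>{x\<in>DLA S. length x = k}. h (length xs)) = real (LS {1..S} k) * h k"
      by (simp add: LS_def)
  qed
  finally show ?thesis .
qed

lemma sum_DL1_len: assumes S: "S \<ge> 1"
  shows "(\<Sum>xs\<in>DL S 1. h (length xs)) = (\<Sum>k\<in>{1..S}. real (LS {2..S} (k - 1)) * h k)"
proof -
  have "(\<Sum>xs\<in>DL S 1. h (length xs)) = (\<Sum>k\<in>{1..S}. \<Sum>xs\<in>{x\<in>DL S 1. length x = k}. h (length xs))"
    by (rule sum.group[symmetric, OF finite_DL]) (auto simp: DL_def distinct_len_le Suc_le_eq)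
  also have "\<dots> = (\<Sum>k\<in>{1..S}. real (LS {2..S} (k - 1)) * h k)"
  proof (rule sum.cong[OF refl])
    fix k assume k: "k \<in> {1..S}"
    let ?L = "{ys. length ys = k - 1 \<and> distinct ys \<and> set ys \<subseteq> {2..S}}"
    have "{x\<in>DL S 1. length x = k} = (Cons 1) ` ?L"
    proof (intro set_eqI iffI)
      fix xs assume xs: "xs \<in> {x\<in>DL S 1. length x = k}"
      then obtain ys where ys: "xs = 1 # ys" by (cases xs) (auto simp: DL_def)
      have a: "\<forall>x\<in>set ys. x \<in> {1..S} \<and> x \<noteq> 1" using xs ys by (auto simp: DL_def)
      have "set ys \<subseteq> {2..S}"
      proof
        fix x assume "x \<in> set ys"
        then have "x \<in> {1..S}" "x \<noteq> 1" using a by auto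
        then show "x \<in> {2..S}" by auto
      qed
      then have "ys \<in> ?L" using xs ys by (auto simp: DL_def)
      then show "xs \<in> (Cons 1) ` ?L" using ys by blast
    next
      fix xs assume "xs \<in> (Cons 1) ` ?L"
      then obtain ys where ys: "xs = 1 # ys" "ys \<in> ?L" by blast
      then show "xs \<in> {x\<in>DL S 1. length x = k}" using k S by (auto simp: DL_def)
    qed
    then have "card {x\<in>DL S 1. length x = k} = card ?L" by (simp add: card_image)
    then show "(\<Sum>xs\<in>{x\<in>DL S 1. length x = k}. h (length xs)) = real (LS {2..S} (k - 1)) * h k"
      by (simp add: LS_def)
  qed
  finally show ?thesis .
qed



definition TT :: "nat \<Rightarrow> nat \<Rightarrow> real" where
  "TT S k = real (LS {1..S} k) * real S ^ (S - k)"

lemma LS_SucS: "LS {1..S} (Suc S) = 0"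
proof -
  have "LS {1..S} (Suc S) = (card {1..S} - S) * LS {1..S} S" by (rule LS_Suc) simp
  then show ?thesis by simp
qed

lemma TT_SucS: "TT S (Suc S) = 0"
  unfolding TT_def LS_SucS by simp

lemma TT_rec: assumes k: "k \<le> S"
  shows "TT S k * real k = real S * (TT S k - TT S (Suc k))"
proof (cases "k < S")
  case True
  have ls: "LS {1..S} (Suc k) = (S - k) * LS {1..S} k" by (simp add: LS_Suc)
  have pw: "real S ^ (S - k) = real S * real S ^ (S - Suc k)"
    using True by (metis Suc_diff_Suc power_Suc)
  have "real S * TT S (Suc k) = real (S - k) * TT S k"
    unfolding TT_def ls pw by simp
  then show ?thesis using True by (simp add: of_nat_diff algebra_simps)
next
  case False
  then have "k = S" using k by simp
  then show ?thesis by (simp add: TT_SucS)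
qed

lemma TT_1: assumes "S \<ge> 1" shows "TT S 1 = real S ^ S"
proof -
  have "LS {1..S} 1 = S" by (simp add: LS_Suc LS_0)
  then show ?thesis using assms unfolding TT_def
    by (metis One_nat_def Suc_pred le_imp_less_Suc less_one not_le of_nat_0_less_iff power_Suc zero_less_iff_neq_zero of_nat_power Suc_le_eq)
qed

lemma tel1: "(\<Sum>k\<in>{1..n}. (T k - T (Suc k))) = T 1 - T (Suc n)" for T :: "nat \<Rightarrow> real"
  by (induction n) (auto simp: sum.cl_ivl_Suc)

lemma tel2: "(\<Sum>k\<in>{1..n}. (T k - T (Suc k)) * (real k + 1)) = T 1 + (\<Sum>k\<in>{1..n}. T k) - (real n + 1) * T (Suc n)"
  for T :: "nat \<Rightarrow> real"
  by (induction n) (auto simp: sum.cl_ivl_Suc algebra_simps)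

lemma sumTT1: assumes "S \<ge> 1" shows "(\<Sum>k\<in>{1..S}. TT S k * real k) = real S * real S ^ S"
proof -
  have "(\<Sum>k\<in>{1..S}. TT S k * real k) = (\<Sum>k\<in>{1..S}. real S * (TT S k - TT S (Suc k)))"
    by (rule sum.cong) (auto simp: TT_rec)
  also have "\<dots> = real S * (\<Sum>k\<in>{1..S}. (TT S k - TT S (Suc k)))" by (simp add: sum_distrib_left)
  also have "\<dots> = real S * (TT S 1 - TT S (Suc S))" by (simp only: tel1)
  finally show ?thesis using TT_1[OF assms] TT_SucS by simp
qed

lemma sumTT2: assumes "S \<ge> 1"
  shows "(\<Sum>k\<in>{1..S}. TT S k * real k * (real k + 1)) = real S * (real S ^ S + (\<Sum>k\<in>{1..S}. TT S k))"
proof -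
  have "(\<Sum>k\<in>{1..S}. TT S k * real k * (real k + 1)) = (\<Sum>k\<in>{1..S}. real S * ((TT S k - TT S (Suc k)) * (real k + 1)))"
    by (rule sum.cong) (auto simp: TT_rec)
  also have "\<dots> = real S * (\<Sum>k\<in>{1..S}. (TT S k - TT S (Suc k)) * (real k + 1))" by (simp add: sum_distrib_left)
  also have "\<dots> = real S * (TT S 1 + (\<Sum>k\<in>{1..S}. TT S k) - (real S + 1) * TT S (Suc S))"
    by (simp only: tel2)
  finally show ?thesis using TT_1[OF assms] TT_SucS by simp
qed

lemma sum_tri: "(\<Sum>j<k. real (k - j)) = real k * (real k + 1) / 2"
proof (induction k)
  case (Suc k)
  have "(\<Sum>j<Suc k. real (Suc k - j)) = real (Suc k) + (\<Sum>j<k. real (Suc k - Suc j))"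
    by (subst sum.lessThan_Suc_shift) simp
  also have "(\<Sum>j<k. real (Suc k - Suc j)) = (\<Sum>j<k. real (k - j))" by simp
  finally show ?case using Suc by (simp add: field_simps)
qed simp



lemma card_ind: "(A::nat set) \<subseteq> {1..S} \<Longrightarrow> real (card A) = (\<Sum>s\<in>{1..S}. if s \<in> A then 1 else 0)"
proof -
  assume A: "A \<subseteq> {1..S}"
  have fin: "finite {1..S}" by simp
  have "(\<Sum>s\<in>{s\<in>{1..S}. s \<in> A}. (1::real)) = (\<Sum>s\<in>{1..S}. if s \<in> A then 1 else 0)"
    by (rule sum.inter_filter[OF fin])
  then have "(\<Sum>s\<in>{1..S}. if s \<in> A then 1 else 0) = (\<Sum>s\<in>{s\<in>{1..S}. s \<in> A}. (1::real))" by simp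
  also have "{s\<in>{1..S}. s \<in> A} = A" using A by auto
  finally show ?thesis by simp
qed

lemma cyc_sub: "cyc_states S f \<subseteq> {1..S}" by (auto simp: cyc_states_def)
lemma cycf_sub: "cyc_from S f s \<subseteq> {1..S}" by (auto simp: cyc_from_def cyc_states_def)

definition PP :: "nat \<Rightarrow> nat \<Rightarrow> real" where
  "PP S s = (\<Sum>xs\<in>DL S s. real S ^ (S - length xs))"

lemma sum_lt_delta: "0 < k \<Longrightarrow> (\<Sum>j<k. c * (if j = 0 then x j else 0)) = c * x 0" for c :: real and k :: nat
proof -
  assume k: "0 < k"
  have "(\<Sum>j<k. c * (if j = 0 then x j else 0)) = (\<Sum>j<k. if j = 0 then c * x 0 else 0)"
    by (rule sum.cong) auto
  also have "\<dots> = (if 0 \<in> {..<k} then c * x 0 else 0)"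
    by (rule sum.delta[of "{..<k}" 0 "\<lambda>_. c * x 0"]) simp
  also have "\<dots> = c * x 0" using k by simp
  finally show ?thesis .
qed

lemma ind_s: assumes s: "s \<in> {1..S}"
  shows "(\<Sum>f\<in>maps S. if s \<in> cyc_states S f then 1 else 0) = PP S s"
proof -
  have "(\<Sum>f\<in>maps S. if s \<in> cyc_states S f then 1 else 0)
      = (\<Sum>xs\<in>DL S s. \<Sum>j<length xs. real S ^ (S - length xs) * (if j = 0 then 1 else 0))"
    by (rule sum_orb[OF s]) (simp add: orb_s)
  also have "\<dots> = PP S s" unfolding PP_def
  proof (rule sum.cong[OF refl])
    fix xs assume "xs \<in> DL S s"
    then have "0 < length xs" by (auto simp: DL_def)
    then show "(\<Sum>j<length xs. real S ^ (S - length xs) * (if j = 0 then 1 else 0)) = real S ^ (S - length xs)"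
      using sum_lt_delta[of "length xs" "real S ^ (S - length xs)" "\<lambda>_. 1"] by simp
  qed
  finally show ?thesis .
qed

lemma sumPP: "(\<Sum>s\<in>{1..S}. PP S s) = (\<Sum>k\<in>{1..S}. TT S k)"
proof -
  have "(\<Sum>s\<in>{1..S}. PP S s) = (\<Sum>xs\<in>DLA S. real S ^ (S - length xs))"
    unfolding PP_def by (rule sum_DL_hd)
  also have "\<dots> = (\<Sum>k\<in>{1..S}. real (LS {1..S} k) * real S ^ (S - k))"
    by (rule sum_DLA_len)
  finally show ?thesis by (simp add: TT_def)
qed

lemma sumC: "(\<Sum>f\<in>maps S. real (numC S f)) = (\<Sum>k\<in>{1..S}. TT S k)"
proof -
  have "(\<Sum>f\<in>maps S. real (numC S f)) = (\<Sum>f\<in>maps S. \<Sum>s\<in>{1..S}. if s \<in> cyc_states S f then 1 else 0)"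
    unfolding numC_def by (rule sum.cong[OF refl]) (rule card_ind[OF cyc_sub])
  also have "\<dots> = (\<Sum>s\<in>{1..S}. \<Sum>f\<in>maps S. if s \<in> cyc_states S f then 1 else 0)"
    by (rule sum.swap)
  also have "\<dots> = (\<Sum>s\<in>{1..S}. PP S s)" by (rule sum.cong[OF refl]) (rule ind_s)
  finally show ?thesis using sumPP by simp
qed

lemma sumC1: assumes S: "S \<ge> 1"
  shows "(\<Sum>f\<in>maps S. real (numC1 S f)) = (real S ^ S + (\<Sum>k\<in>{1..S}. TT S k)) / 2"
proof -
  have s1: "(1::nat) \<in> {1..S}" using S by simp
  have "(\<Sum>f\<in>maps S. real (numC1 S f))
      = (\<Sum>xs\<in>DL S 1. \<Sum>j<length xs. real S ^ (S - length xs) * real (length xs - j))"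
    by (rule sum_orb[OF s1]) (simp add: numC1_def orb_card cycle1_def cyc_from_def[symmetric])
  also have "\<dots> = (\<Sum>xs\<in>DL S 1. real S ^ (S - length xs) * (real (length xs) * (real (length xs) + 1) / 2))"
    by (rule sum.cong[OF refl]) (simp only: sum_distrib_left[symmetric] sum_tri)
  also have "\<dots> = (\<Sum>k\<in>{1..S}. real (LS {2..S} (k - 1)) * (real S ^ (S - k) * (real k * (real k + 1) / 2)))"
    by (rule sum_DL1_len[OF S])
  finally have e: "(\<Sum>f\<in>maps S. real (numC1 S f)) = \<dots>" .
  have "real S * (\<Sum>k\<in>{1..S}. real (LS {2..S} (k - 1)) * (real S ^ (S - k) * (real k * (real k + 1) / 2)))
      = (\<Sum>k\<in>{1..S}. TT S k * real k * (real k + 1)) / 2"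
    unfolding sum_distrib_left sum_divide_distrib
  proof (rule sum.cong[OF refl])
    fix k assume k: "k \<in> {1..S}"
    have "S * LS {2..S} (k - 1) = LS {1..S} (Suc (k - 1))" by (rule LS_rel[OF S])
    also have "Suc (k - 1) = k" using k by simp
    finally have "real S * real (LS {2..S} (k - 1)) = real (LS {1..S} k)" by (metis of_nat_mult)
    then show "real S * (real (LS {2..S} (k - 1)) * (real S ^ (S - k) * (real k * (real k + 1) / 2)))
        = TT S k * real k * (real k + 1) / 2" unfolding TT_def
      by (metis (no_types, lifting) mult.assoc mult.left_commute times_divide_eq_right)
  qed
  also have "\<dots> = real S * (real S ^ S + (\<Sum>k\<in>{1..S}. TT S k)) / 2" using sumTT2[OF S] by simp
  finally show ?thesis using e S by simp
qed

lemma term1_s: assumes s: "s \<in> {1..S}"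
  shows "(\<Sum>f\<in>maps S. if s \<in> cyc_states S f then real (card (cyc_from S f s)) else 0)
    = (\<Sum>xs\<in>DL S s. real S ^ (S - length xs) * real (length xs))"
proof -
  have "(\<Sum>f\<in>maps S. if s \<in> cyc_states S f then real (card (cyc_from S f s)) else 0)
      = (\<Sum>xs\<in>DL S s. \<Sum>j<length xs. real S ^ (S - length xs) * (if j = 0 then real (length xs - j) else 0))"
    by (rule sum_orb[OF s]) (simp add: orb_s orb_card)
  also have "\<dots> = (\<Sum>xs\<in>DL S s. real S ^ (S - length xs) * real (length xs))"
  proof (rule sum.cong[OF refl])
    fix xs assume "xs \<in> DL S s"
    then have "0 < length xs" by (auto simp: DL_def)
    then show "(\<Sum>j<length xs. real S ^ (S - length xs) * (if j = 0 then real (length xs - j) else 0)) = real S ^ (S - length xs) * real (length xs)"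
      using sum_lt_delta[of "length xs" "real S ^ (S - length xs)" "\<lambda>j. real (length xs - j)"] by simp
  qed
  finally show ?thesis .
qed

lemma term1_tot: assumes S: "S \<ge> 1"
  shows "(\<Sum>s\<in>{1..S}. \<Sum>f\<in>maps S. if s \<in> cyc_states S f then real (card (cyc_from S f s)) else 0)
    = real S * real S ^ S"
proof -
  have "(\<Sum>s\<in>{1..S}. \<Sum>f\<in>maps S. if s \<in> cyc_states S f then real (card (cyc_from S f s)) else 0)
     = (\<Sum>s\<in>{1..S}. \<Sum>xs\<in>DL S s. real S ^ (S - length xs) * real (length xs))"
    by (rule sum.cong[OF refl]) (rule term1_s)
  also have "\<dots> = (\<Sum>xs\<in>DLA S. real S ^ (S - length xs) * real (length xs))" by (rule sum_DL_hd)
  also have "\<dots> = (\<Sum>k\<in>{1..S}. real (LS {1..S} k) * (real S ^ (S - k) * real k))"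
    by (rule sum_DLA_len)
  also have "\<dots> = (\<Sum>k\<in>{1..S}. TT S k * real k)" by (simp add: TT_def mult.assoc)
  finally show ?thesis using sumTT1[OF S] by simp
qed



lemma Bfix_app: assumes "f \<in> Bfix S xs ts" "f \<in> Bfix S ys us" "length ts = length xs"
  shows "f \<in> Bfix S (xs @ ys) (ts @ us)"
  using assms unfolding Bfix_def by (auto simp: nth_append)

lemma reach_back: assumes t: "t \<in> cyc_states S f" and u: "u = (f^^n) t"
  shows "\<exists>m. (f^^m) u = t"
proof -
  obtain p where p: "p > 0" "(f^^p) t = t" using t by (auto simp: cyc_states_def)
  have np: "n \<le> n * p" using p(1) by simp
  have "(f^^(n*p - n)) u = (f^^(n*p - n + n)) t" using u by (simp add: funpow_add)
  also have "n*p - n + n = p * n" using np by simp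
  also have "(f^^(p*n)) t = t" using funpow_iter[OF p(2)] by (simp add: mult.commute)
  finally show ?thesis by blast
qed

lemma orb0_set: "orb S s f xs 0 \<Longrightarrow> cyc_from S f s = set xs"
  using orb_cyc[of S s f xs 0] by (auto simp: in_set_conv_nth)

lemma ind_card: "finite A \<Longrightarrow> (\<Sum>f\<in>A. if P f then 1 else 0) = real (card {f\<in>A. P f})"
proof -
  assume fA: "finite A"
  have "(\<Sum>f\<in>{f\<in>A. P f}. (1::real)) = (\<Sum>f\<in>A. if P f then 1 else 0)"
    by (rule sum.inter_filter[OF fA])
  then show ?thesis by simp
qed

lemma E_bound: assumes s: "s \<in> {1..S}" and t: "t \<in> {1..S}"
  shows "real (card {f\<in>maps S. s \<in> cyc_states S f \<and> t \<in> cyc_states S f \<and> t \<notin> cyc_from S f s})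
    \<le> PP S s * PP S t / real S ^ S"
proof -
  let ?E = "{f\<in>maps S. s \<in> cyc_states S f \<and> t \<in> cyc_states S f \<and> t \<notin> cyc_from S f s}"
  let ?J = "{p \<in> DL S s \<times> DL S t. set (fst p) \<inter> set (snd p) = {}}"
  let ?B = "\<lambda>p. Bfix S (fst p @ snd p) (tg (fst p) 0 @ tg (snd p) 0)"
  have S0: "S \<ge> 1" using s by simp
  have fJ: "finite ?J" using finite_DL by auto
  have sub: "?E \<subseteq> (\<Union>p\<in>?J. ?B p)"
  proof
    fix f assume f: "f \<in> ?E"
    obtain xs j where o1: "orb S s f xs j" using orb_cover[of f S s] f s by auto
    obtain ys j' where o2: "orb S t f ys j'" using orb_cover[of f S t] f t by auto
    have j0: "j = 0" using orb_s[OF o1] f by simp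
    have j0': "j' = 0" using orb_s[OF o2] f by simp
    have c1: "cyc_from S f s = set xs" using orb0_set o1 j0 by simp
    have c2: "cyc_from S f t = set ys" using orb0_set o2 j0' by simp
    have disj: "set xs \<inter> set ys = {}"
    proof (rule ccontr)
      assume "set xs \<inter> set ys \<noteq> {}"
      then obtain u where "u \<in> cyc_from S f s" "u \<in> cyc_from S f t" using c1 c2 by auto
      then obtain n n' where n: "u = (f^^n) t" and n': "(f^^n') s = u"
        by (auto simp: cyc_from_def)
      obtain m where m: "(f^^m) u = t" using reach_back[OF _ n] f by auto
      have "(f^^(m + n')) s = t" using m n' by (simp add: funpow_add)
      then have "t \<in> cyc_from S f s" using f unfolding cyc_from_def by blast
      then show False using f by simp
    qed
    have "f \<in> ?B (xs, ys)"
      using Bfix_app[of f S xs "tg xs 0" ys "tg ys 0"] o1 o2 j0 j0' tg_props[of xs S s 0]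
      by (auto simp: orb_B)
    moreover have "(xs, ys) \<in> ?J" using o1 o2 disj by (auto simp: orb_B)
    ultimately show "f \<in> (\<Union>p\<in>?J. ?B p)" by blast
  qed
  have fU: "finite (\<Union>p\<in>?J. ?B p)"
    by (rule finite_subset[OF _ finite_maps[of S]]) (auto simp: Bfix_def)
  have "card ?E \<le> card (\<Union>p\<in>?J. ?B p)" by (rule card_mono[OF fU sub])
  also have "\<dots> \<le> (\<Sum>p\<in>?J. card (?B p))" by (rule card_UN_le[OF fJ])
  finally have c0: "card ?E \<le> (\<Sum>p\<in>?J. card (?B p))" .
  have "real (card ?E) \<le> real (\<Sum>p\<in>?J. card (?B p))" using c0 by (simp only: of_nat_le_iff)
  also have "\<dots> = (\<Sum>p\<in>?J. real (card (?B p)))" by (rule of_nat_sum)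
  also have "\<dots> = (\<Sum>p\<in>?J. real S ^ (S - length (fst p)) * real S ^ (S - length (snd p)) / real S ^ S)"
  proof (rule sum.cong[OF refl])
    fix p assume p: "p \<in> ?J"
    obtain xs ys where pp: "p = (xs, ys)" by (cases p)
    have xs: "xs \<in> DL S s" and ys: "ys \<in> DL S t" and d: "set xs \<inter> set ys = {}" using p pp by auto
    have dist: "distinct (xs @ ys)" using xs ys d by (auto simp: DL_def)
    have st: "set (xs @ ys) \<subseteq> {1..S}" using xs ys by (auto simp: DL_def)
    have l: "length (xs @ ys) \<le> S" by (rule distinct_len_le[OF dist st])
    have xs0: "0 < length xs" using xs by (auto simp: DL_def)
    have ys0: "0 < length ys" using ys by (auto simp: DL_def)
    have tg1: "length (tg xs 0) = length xs" "set (tg xs 0) \<subseteq> {1..S}" using tg_props[OF xs xs0] by auto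
    have tg2: "length (tg ys 0) = length ys" "set (tg ys 0) \<subseteq> {1..S}" using tg_props[OF ys ys0] by auto
    have "card (?B p) = S ^ (S - length (xs @ ys))"
      unfolding pp fst_conv snd_conv
      by (rule card_Bfix[OF dist]) (use tg1 tg2 st in auto)
    then have "real (card (?B p)) = real S ^ (S - (length xs + length ys))" by simp
    also have "\<dots> = real S ^ (S - length xs) * real S ^ (S - length ys) / real S ^ S"
    proof -
      have e: "S - (length xs + length ys) + S = (S - length xs) + (S - length ys)" using l by simp
      have "real S ^ (S - (length xs + length ys)) * real S ^ S = real S ^ (S - length xs) * real S ^ (S - length ys)"
        by (simp only: power_add[symmetric] e)
      moreover have "real S ^ S > 0" using S0 by simp
      ultimately show ?thesis by (simp add: field_simps)
    qed
    finally show "real (card (?B p)) = real S ^ (S - length (fst p)) * real S ^ (S - length (snd p)) / real S ^ S"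
      using pp by simp
  qed
  also have "\<dots> \<le> (\<Sum>p\<in>DL S s \<times> DL S t. real S ^ (S - length (fst p)) * real S ^ (S - length (snd p)) / real S ^ S)"
    by (rule sum_mono2) (auto simp: finite_DL)
  also have "\<dots> = PP S s * PP S t / real S ^ S"
    unfolding PP_def sum_product sum_divide_distrib
    by (simp add: sum.cartesian_product case_prod_beta)
  finally show ?thesis .
qed



lemma pt_split:
  "(if s \<in> cyc_states S f then 1 else 0) * (if t \<in> cyc_states S f then 1 else 0)
   = (if s \<in> cyc_states S f then (if t \<in> cyc_from S f s then 1 else 0) else 0)
     + (if s \<in> cyc_states S f \<and> t \<in> cyc_states S f \<and> t \<notin> cyc_from S f s then 1 else (0::real))"
  by (auto simp: cyc_from_def)

lemma sumC2: assumes S: "S \<ge> 1"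
  shows "(\<Sum>f\<in>maps S. (real (numC S f))\<^sup>2) \<le> real S * real S ^ S + (\<Sum>k\<in>{1..S}. TT S k)\<^sup>2 / real S ^ S"
proof -
  define I where "I s f = (if s \<in> cyc_states S f then 1 else (0::real))" for s f
  define A where "A s t f = (if s \<in> cyc_states S f then (if t \<in> cyc_from S f s then 1 else 0) else (0::real))" for s t f
  define B where "B s t f = (if s \<in> cyc_states S f \<and> t \<in> cyc_states S f \<and> t \<notin> cyc_from S f s then 1 else (0::real))" for s t f
  have sq: "(real (numC S f))\<^sup>2 = (\<Sum>s\<in>{1..S}. \<Sum>t\<in>{1..S}. A s t f + B s t f)" for f
  proof -
    have "real (numC S f) = (\<Sum>s\<in>{1..S}. I s f)" unfolding numC_def I_def by (rule card_ind[OF cyc_sub])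
    then have "(real (numC S f))\<^sup>2 = (\<Sum>s\<in>{1..S}. \<Sum>t\<in>{1..S}. I s f * I t f)"
      by (simp add: power2_eq_square sum_product)
    also have "\<dots> = (\<Sum>s\<in>{1..S}. \<Sum>t\<in>{1..S}. A s t f + B s t f)"
      unfolding I_def A_def B_def using pt_split by simp
    finally show ?thesis .
  qed
  have "(\<Sum>f\<in>maps S. (real (numC S f))\<^sup>2) = (\<Sum>f\<in>maps S. \<Sum>s\<in>{1..S}. \<Sum>t\<in>{1..S}. A s t f + B s t f)"
    by (simp add: sq)
  also have "\<dots> = (\<Sum>f\<in>maps S. \<Sum>s\<in>{1..S}. \<Sum>t\<in>{1..S}. A s t f) + (\<Sum>f\<in>maps S. \<Sum>s\<in>{1..S}. \<Sum>t\<in>{1..S}. B s t f)"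
    by (simp add: sum.distrib)
  also have "(\<Sum>f\<in>maps S. \<Sum>s\<in>{1..S}. \<Sum>t\<in>{1..S}. A s t f) = real S * real S ^ S"
  proof -
    have "(\<Sum>t\<in>{1..S}. A s t f) = (if s \<in> cyc_states S f then real (card (cyc_from S f s)) else 0)" for s f
      unfolding A_def using card_ind[OF cycf_sub, of S f s] by simp
    then have "(\<Sum>f\<in>maps S. \<Sum>s\<in>{1..S}. \<Sum>t\<in>{1..S}. A s t f)
       = (\<Sum>f\<in>maps S. \<Sum>s\<in>{1..S}. if s \<in> cyc_states S f then real (card (cyc_from S f s)) else 0)" by simp
    also have "\<dots> = (\<Sum>s\<in>{1..S}. \<Sum>f\<in>maps S. if s \<in> cyc_states S f then real (card (cyc_from S f s)) else 0)"
      by (rule sum.swap)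
    also have "\<dots> = real S * real S ^ S" by (rule term1_tot[OF S])
    finally show ?thesis .
  qed
  also have "(\<Sum>f\<in>maps S. \<Sum>s\<in>{1..S}. \<Sum>t\<in>{1..S}. B s t f) = (\<Sum>s\<in>{1..S}. \<Sum>t\<in>{1..S}. \<Sum>f\<in>maps S. B s t f)"
    by (simp add: sum.swap[of _ "maps S"] sum.swap[of _ "{1..S}"])
  also have "\<dots> \<le> (\<Sum>s\<in>{1..S}. \<Sum>t\<in>{1..S}. PP S s * PP S t / real S ^ S)"
  proof (intro sum_mono)
    fix s t assume s: "s \<in> {1..S}" and t: "t \<in> {1..S}"
    have "(\<Sum>f\<in>maps S. B s t f) = real (card {f\<in>maps S. s \<in> cyc_states S f \<and> t \<in> cyc_states S f \<and> t \<notin> cyc_from S f s})"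
      unfolding B_def by (rule ind_card[OF finite_maps])
    also have "\<dots> \<le> PP S s * PP S t / real S ^ S" by (rule E_bound[OF s t])
    finally show "(\<Sum>f\<in>maps S. B s t f) \<le> PP S s * PP S t / real S ^ S" .
  qed
  also have "(\<Sum>s\<in>{1..S}. \<Sum>t\<in>{1..S}. PP S s * PP S t / real S ^ S) = (\<Sum>s\<in>{1..S}. PP S s)\<^sup>2 / real S ^ S"
    by (simp add: power2_eq_square sum_product sum_divide_distrib)
  also have "\<dots> = (\<Sum>k\<in>{1..S}. TT S k)\<^sup>2 / real S ^ S" by (simp only: sumPP)
  finally show ?thesis by simp
qed



lemma ln2_gt: "1/2 < ln (2::real)"
proof -
  have e: "exp (1/2::real) * exp (1/2) = exp 1" by (simp add: exp_add[symmetric])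
  have lt: "exp (1/2::real) < 2"
  proof (rule ccontr)
    assume "\<not> exp (1/2::real) < 2"
    then have "2 \<le> exp (1/2::real)" by simp
    then have "2 * 2 \<le> exp (1/2::real) * exp (1/2)" by (intro mult_mono) auto
    then show False using e exp_le by simp
  qed
  have "ln (exp (1/2::real)) < ln 2" using lt by (subst ln_less_cancel_iff) auto
  then show ?thesis by simp
qed

lemma ln3_ge: "1 \<le> ln (3::real)"
proof -
  have "ln (exp (1::real)) \<le> ln 3" using exp_le by (subst ln_le_cancel_iff) auto
  then show ?thesis by simp
qed

lemma maps_ne: "S \<ge> 1 \<Longrightarrow> maps S \<noteq> {}"
  using card_maps[of S] by (metis card.empty power_eq_0_iff not_one_le_zero)

lemma Eexp: assumes "S \<ge> 1"
  shows "measure_pmf.expectation (rmap S) X = sum X (maps S) / real S ^ S"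
  unfolding rmap_def integral_pmf_of_set[OF maps_ne[OF assms] finite_maps] card_maps by simp

lemma Evar: fixes X :: "(nat \<Rightarrow> nat) \<Rightarrow> real" assumes "S \<ge> 1"
  shows "measure_pmf.variance (rmap S) X = measure_pmf.expectation (rmap S) (\<lambda>f. (X f)\<^sup>2) - (measure_pmf.expectation (rmap S) X)\<^sup>2"
proof -
  have fin: "finite (set_pmf (rmap S))" unfolding rmap_def
    using maps_ne[OF assms] finite_maps by simp
  show ?thesis
    by (rule measure_pmf.variance_eq) (auto intro: integrable_measure_pmf_finite[OF fin])
qed

lemma numC_le: "numC S f \<le> S"
proof -
  have "card (cyc_states S f) \<le> card {1..S}" by (rule card_mono[OF _ cyc_sub]) simp
  then show ?thesis by (simp add: numC_def)
qed

theorem lemma1: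
  shows "(\<forall>S::nat. S \<ge> 2 \<longrightarrow>
            measure_pmf.expectation (rmap S) (\<lambda>f. real (numC S f))
            < measure_pmf.expectation (rmap S) (\<lambda>f. real (numC1 S f)) * (ln (real S) + 1))
       \<and> (\<exists>K::real. K > 0 \<and> (\<forall>S::nat. S \<ge> 2 \<longrightarrow>
            measure_pmf.variance (rmap S) (\<lambda>f. real (numC S f)) \<le> K * real S * ln (real S)))"
proof (intro conjI allI impI exI[of _ 2])
  fix S :: nat assume S2: "S \<ge> 2"
  then have S1: "S \<ge> 1" by simp
  define N where "N = real S ^ S"
  define T where "T = (\<Sum>k\<in>{1..S}. TT S k)"
  have Npos: "N > 0" using S1 by (simp add: N_def)
  have EC: "measure_pmf.expectation (rmap S) (\<lambda>f. real (numC S f)) = T / N"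
    unfolding Eexp[OF S1] sumC T_def N_def ..
  have EC1: "measure_pmf.expectation (rmap S) (\<lambda>f. real (numC1 S f)) = (1 + T / N) / 2"
    unfolding Eexp[OF S1] sumC1[OF S1] T_def[symmetric] N_def[symmetric] using Npos
    by (simp add: field_simps)
  have "T = (\<Sum>f\<in>maps S. real (numC S f))" unfolding T_def sumC ..
  then have T0: "0 \<le> T" by (simp add: sum_nonneg)
  have TS: "T \<le> real S * N"
  proof -
    have "T = (\<Sum>f\<in>maps S. real (numC S f))" unfolding T_def sumC ..
    also have "\<dots> \<le> (\<Sum>f\<in>maps S. real S)" by (rule sum_mono) (simp add: numC_le)
    also have "\<dots> = real S * N" by (simp add: card_maps N_def)
    finally show ?thesis .
  qed
  define E where "E = T / N"
  have E0: "0 \<le> E" using T0 Npos by (simp add: E_def)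
  have ES: "E \<le> real S" using TS Npos by (simp add: E_def field_simps)
  have lnS: "1/2 < ln (real S)"
  proof -
    have "ln 2 \<le> ln (real S)" using S2 by (subst ln_le_cancel_iff) auto
    then show ?thesis using ln2_gt by simp
  qed
  show "measure_pmf.expectation (rmap S) (\<lambda>f. real (numC S f))
            < measure_pmf.expectation (rmap S) (\<lambda>f. real (numC1 S f)) * (ln (real S) + 1)"
    unfolding EC EC1 E_def[symmetric]
  proof (cases "S = 2")
    case True
    then have E2: "E \<le> 2" using ES by simp
    have h: "0 < (1 + E) / 2" using E0 by simp
    have "(1 + E) / 2 * (3/2) < (1 + E) / 2 * (ln (real S) + 1)"
      by (rule mult_strict_left_mono[OF _ h]) (use lnS in simp)
    moreover have "E \<le> (1 + E) / 2 * (3/2)" using E2 by simp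
    ultimately show "E < (1 + E) / 2 * (ln (real S) + 1)" by linarith
  next
    case False
    then have "S \<ge> 3" using S2 by simp
    then have "ln 3 \<le> ln (real S)" by (subst ln_le_cancel_iff) auto
    then have l: "2 \<le> ln (real S) + 1" using ln3_ge by simp
    have h: "0 \<le> (1 + E) / 2" using E0 by simp
    have "(1 + E) / 2 * 2 \<le> (1 + E) / 2 * (ln (real S) + 1)"
      by (rule mult_left_mono[OF l h])
    then show "E < (1 + E) / 2 * (ln (real S) + 1)" by simp
  qed
next
  show "(0::real) < 2" by simp
next
  fix S :: nat assume S2: "S \<ge> 2"
  then have S1: "S \<ge> 1" by simp
  define N where "N = real S ^ S"
  define T where "T = (\<Sum>k\<in>{1..S}. TT S k)"
  have Npos: "N > 0" using S1 by (simp add: N_def)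
  have EC: "measure_pmf.expectation (rmap S) (\<lambda>f. real (numC S f)) = T / N"
    unfolding Eexp[OF S1] sumC T_def N_def ..
  have E2: "measure_pmf.expectation (rmap S) (\<lambda>f. (real (numC S f))\<^sup>2) \<le> real S + (T / N)\<^sup>2"
  proof -
    have "measure_pmf.expectation (rmap S) (\<lambda>f. (real (numC S f))\<^sup>2) = (\<Sum>f\<in>maps S. (real (numC S f))\<^sup>2) / N"
      unfolding Eexp[OF S1] N_def ..
    also have "\<dots> \<le> (real S * N + T\<^sup>2 / N) / N"
      using sumC2[OF S1] Npos unfolding T_def[symmetric] N_def[symmetric]
      by (simp add: divide_right_mono)
    also have "\<dots> = real S + (T / N)\<^sup>2" using Npos by (simp add: field_simps power2_eq_square)
    finally show ?thesis .
  qed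
  have V: "measure_pmf.variance (rmap S) (\<lambda>f. real (numC S f)) \<le> real S"
  proof -
    have "measure_pmf.variance (rmap S) (\<lambda>f. real (numC S f))
      = measure_pmf.expectation (rmap S) (\<lambda>f. (real (numC S f))\<^sup>2) - (measure_pmf.expectation (rmap S) (\<lambda>f. real (numC S f)))\<^sup>2"
      by (rule Evar[OF S1])
    then show ?thesis using E2 EC by simp
  qed
  have lnS: "1/2 < ln (real S)"
  proof -
    have "ln 2 \<le> ln (real S)" using S2 by (subst ln_le_cancel_iff) auto
    then show ?thesis using ln2_gt by simp
  qed
  have "real S \<le> 2 * real S * ln (real S)"
  proof -
    have "real S * 1 \<le> real S * (2 * ln (real S))" by (rule mult_left_mono) (use lnS in auto)
    then show ?thesis by (simp add: algebra_simps)
  qed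
  then show "measure_pmf.variance (rmap S) (\<lambda>f. real (numC S f)) \<le> 2 * real S * ln (real S)"
    using V by linarith
qed


end
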